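(* Let $p$ be a prime and $d$ a positive integer. For every dimension $k\geq d+1$ and every $S\subseteq\mathbb{F}_p^k$ with $|S|\geq\binom{d+k+1}{k}+1$, there exists a function $h:\mathbb{F}_p^k\to\mathbb{F}_p$ such that $\deg(h)=k(p-1)-(d+1)$ and $\supp(h)\subseteq S$.
   Context: Functions $\mathbb{F}_p^k\to\mathbb{F}_p$ are identified with their unique polynomial representations with individual degrees in $\{0,\dots,p-1\}$; the degree is the maximal total degree of a monomial with nonzero coefficient. $\supp(h)=\{\alpha\in\mathbb{F}_p^k: h(\alpha)\neq0\}$. *)

theory Defs
  imports "HOL-Computational_Algebra.Primes"
begin

text \<open>F_p is modelled as {0..<p} with arithmetic mod p; a point of F_p^k is a map
  alpha :: nat => nat with alpha i < p for i < k and alpha i = 0 for i >= k.\<close>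

definition points :: "nat \<Rightarrow> nat \<Rightarrow> (nat \<Rightarrow> nat) set" where
  "points p k = {\<alpha>. (\<forall>i<k. \<alpha> i < p) \<and> (\<forall>i\<ge>k. \<alpha> i = 0)}"

definition exps :: "nat \<Rightarrow> nat \<Rightarrow> (nat \<Rightarrow> nat) set" where
  "exps p k = {e. (\<forall>i<k. e i < p) \<and> (\<forall>i\<ge>k. e i = 0)}"

definition tdeg :: "nat \<Rightarrow> (nat \<Rightarrow> nat) \<Rightarrow> nat" where
  "tdeg k e = (\<Sum>i<k. e i)"

definition mono_eval :: "nat \<Rightarrow> (nat \<Rightarrow> nat) \<Rightarrow> (nat \<Rightarrow> nat) \<Rightarrow> nat" where
  "mono_eval k e \<alpha> = (\<Prod>i<k. \<alpha> i ^ e i)"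

definition represents :: "nat \<Rightarrow> nat \<Rightarrow> ((nat \<Rightarrow> nat) \<Rightarrow> nat) \<Rightarrow> ((nat \<Rightarrow> nat) \<Rightarrow> nat) \<Rightarrow> bool" where
  "represents p k c h \<longleftrightarrow>
     (\<forall>e. c e < p) \<and> (\<forall>e. e \<notin> exps p k \<longrightarrow> c e = 0) \<and>
     (\<forall>\<alpha>\<in>points p k. h \<alpha> = (\<Sum>e\<in>exps p k. c e * mono_eval k e \<alpha>) mod p)"

text \<open>deg(h) = D: the (unique) reduced representation of h has degree D.\<close>
definition fun_degree_eq :: "nat \<Rightarrow> nat \<Rightarrow> ((nat \<Rightarrow> nat) \<Rightarrow> nat) \<Rightarrow> nat \<Rightarrow> bool" where
  "fun_degree_eq p k h D \<longleftrightarrow>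
     (\<exists>c. represents p k c h \<and>
          (\<exists>e\<in>exps p k. c e \<noteq> 0 \<and> tdeg k e = D) \<and>
          (\<forall>e\<in>exps p k. c e \<noteq> 0 \<longrightarrow> tdeg k e \<le> D))"

definition supp :: "nat \<Rightarrow> nat \<Rightarrow> ((nat \<Rightarrow> nat) \<Rightarrow> nat) \<Rightarrow> (nat \<Rightarrow> nat) set" where
  "supp p k h = {\<alpha>\<in>points p k. h \<alpha> \<noteq> 0}"

end

theory Submission
  imports Defs "HOL-Number_Theory.Number_Theory" "HOL-Library.FuncSet"
begin

lemma fermat_nat_pow:
  fixes p x :: nat
  assumes "prime p" "x < p"
  shows "[int x ^ p = int x] (mod int p)"
proof (cases "x = 0")
  case True
  then show ?thesis using prime_gt_0_nat[OF assms(1)] by (simp add: zero_power)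
next
  case False
  then have "\<not> p dvd x" using assms(2) by (auto dest: dvd_imp_le)
  then have "[x ^ (p - 1) = 1] (mod p)" using fermat_theorem assms(1) by blast
  then have "[x * x ^ (p - 1) = x * 1] (mod p)" by (rule cong_scalar_left)
  moreover have "x * x ^ (p - 1) = x ^ p"
    using prime_gt_0_nat[OF assms(1)] by (metis Suc_diff_1 power_Suc)
  ultimately have "[x ^ p = x] (mod p)" by simp
  then show ?thesis by (metis cong_int_iff of_nat_power)
qed

lemma delta1:
  fixes p x a :: nat
  assumes "prime p" "x < p" "a < p"
  shows "[(\<Sum>j<p. int a ^ (p - Suc j) * int x ^ j) = (if x = a then 0 else 1)] (mod int p)"
proof (cases "x = a")
  case True
  have "(\<Sum>j<p. int a ^ (p - Suc j) * int x ^ j) = (\<Sum>j<p. int a ^ (p - 1))"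
  proof (rule sum.cong[OF refl])
    fix j assume "j \<in> {..<p}"
    then have e: "p - Suc j + j = p - 1" by auto
    have "int a ^ (p - Suc j) * int a ^ j = int a ^ (p - Suc j + j)" by (simp only: power_add)
    then show "int a ^ (p - Suc j) * int x ^ j = int a ^ (p - 1)" by (simp only: True e)
  qed
  also have "\<dots> = int p * int a ^ (p - 1)" by simp
  finally have "(\<Sum>j<p. int a ^ (p - Suc j) * int x ^ j) = int p * int a ^ (p - 1)" .
  then have "[(\<Sum>j<p. int a ^ (p - Suc j) * int x ^ j) = 0] (mod int p)"
    by (simp only: cong_0_iff dvd_triv_left)
  then show ?thesis using True by simp
next
  case False
  let ?s = "\<Sum>j<p. int a ^ (p - Suc j) * int x ^ j"
  have eq: "int x ^ p - int a ^ p = (int x - int a) * ?s" by (rule power_diff_sumr2)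
  have "[int x ^ p - int a ^ p = int x - int a] (mod int p)"
    using fermat_nat_pow[OF assms(1,2)] fermat_nat_pow[OF assms(1,3)] by (rule cong_diff)
  then have c1: "[(int x - int a) * ?s = (int x - int a) * 1] (mod int p)" by (simp only: eq mult_1_right)
  have nd: "\<not> int p dvd (int x - int a)"
  proof
    assume d: "int p dvd (int x - int a)"
    have lt: "\<bar>int x - int a\<bar> < int p" using assms by auto
    have nz: "int x - int a \<noteq> 0" using False by simp
    have "\<bar>int p\<bar> \<le> \<bar>int x - int a\<bar>" using dvd_imp_le_int[OF nz d] .
    then show False using lt by simp
  qed
  have pp: "prime (int p)" using assms(1) by simp
  have "coprime (int p) (int x - int a)" using prime_imp_coprime[OF pp nd] .
  then have cop: "coprime (int x - int a) (int p)" by (simp only: coprime_commute)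
  have "[?s = 1] (mod int p)" using c1 by (simp only: cong_mult_lcancel[OF cop])
  then show ?thesis using False by simp
qed


definition gam :: "nat \<Rightarrow> nat \<Rightarrow> nat \<Rightarrow> int" where
  "gam p j a = (if j = 0 then 1 else 0) - int a ^ (p - Suc j)"

definition G :: "nat \<Rightarrow> nat \<Rightarrow> (nat \<Rightarrow> nat) \<Rightarrow> (nat \<Rightarrow> nat) \<Rightarrow> int" where
  "G p k e a = (\<Prod>i<k. gam p (e i) (a i))"

lemma delta1':
  fixes p x a :: nat
  assumes "prime p" "x < p" "a < p"
  shows "[(\<Sum>j<p. gam p j a * int x ^ j) = (if x = a then 1 else 0)] (mod int p)"
proof -
  have p0: "0 < p" using prime_gt_0_nat[OF assms(1)] .
  have "(\<Sum>j<p. gam p j a * int x ^ j)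
      = (\<Sum>j<p. (if j = 0 then 1 else 0) * int x ^ j) - (\<Sum>j<p. int a ^ (p - Suc j) * int x ^ j)"
    unfolding gam_def by (simp add: left_diff_distrib sum_subtractf)
  also have "(\<Sum>j<p. (if j = 0 then 1 else 0) * int x ^ j) = (\<Sum>j<p. if j = 0 then 1 else (0::int))"
    by (intro sum.cong) auto
  also have "\<dots> = 1"
    using p0 by (subst sum.delta) auto
  finally have e: "(\<Sum>j<p. gam p j a * int x ^ j) = 1 - (\<Sum>j<p. int a ^ (p - Suc j) * int x ^ j)" .
  have "[1 - (\<Sum>j<p. int a ^ (p - Suc j) * int x ^ j) = 1 - (if x = a then 0 else 1)] (mod int p)"
    by (rule cong_diff[OF cong_refl delta1[OF assms]])
  then show ?thesis using e by (simp split: if_splits)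
qed

lemma exps_ext: "exps p k = (\<lambda>g i. if i < k then g i else 0) ` (PiE {..<k} (\<lambda>_. {..<p}))"
proof (intro equalityI subsetI)
  fix e assume e: "e \<in> exps p k"
  let ?g = "restrict e {..<k}"
  have "?g \<in> PiE {..<k} (\<lambda>_. {..<p})" using e by (auto simp: exps_def)
  moreover have "e = (\<lambda>i. if i < k then ?g i else 0)" using e by (auto simp: exps_def)
  ultimately show "e \<in> (\<lambda>g i. if i < k then g i else 0) ` (PiE {..<k} (\<lambda>_. {..<p}))" by blast
qed (auto simp: exps_def PiE_def Pi_def)

lemma finite_exps: "finite (exps p k)"
  unfolding exps_ext by (intro finite_imageI finite_PiE) auto

lemma sum_exps_prod:
  fixes \<phi> :: "nat \<Rightarrow> nat \<Rightarrow> 'c::comm_semiring_1"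
  shows "(\<Sum>e\<in>exps p k. \<Prod>i<k. \<phi> i (e i)) = (\<Prod>i<k. \<Sum>j<p. \<phi> i j)"
proof -
  let ?ext = "\<lambda>g i. if i < k then g i else (0::nat)"
  let ?P = "PiE {..<k} (\<lambda>_::nat. {..<p})"
  have inj: "inj_on ?ext ?P"
  proof
    fix g h assume g: "g \<in> ?P" and h: "h \<in> ?P" and eq: "?ext g = ?ext h"
    show "g = h"
    proof
      fix i show "g i = h i"
      proof (cases "i < k")
        case True then show ?thesis using fun_cong[OF eq, of i] by simp
      next
        case False then show ?thesis using g h by (auto simp: PiE_def extensional_def)
      qed
    qed
  qed
  have "(\<Sum>e\<in>exps p k. \<Prod>i<k. \<phi> i (e i)) = (\<Sum>g\<in>?P. \<Prod>i<k. \<phi> i (?ext g i))"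
    unfolding exps_ext by (rule sum.reindex[OF inj, unfolded comp_def])
  also have "\<dots> = (\<Sum>g\<in>?P. \<Prod>i<k. \<phi> i (g i))"
    by (intro sum.cong prod.cong) auto
  also have "\<dots> = (\<Prod>i<k. \<Sum>j<p. \<phi> i j)"
    by (rule prod_sum_PiE[symmetric]) auto
  finally show ?thesis .
qed

lemma finite_points: "finite (points p k)"
  using finite_exps[of p k] by (simp add: points_def exps_def)

lemma delta:
  assumes "prime p" "\<alpha> \<in> points p k" "a \<in> points p k"
  shows "[(\<Sum>e\<in>exps p k. G p k e a * int (mono_eval k e \<alpha>)) = (if \<alpha> = a then 1 else 0)] (mod int p)"
proof -
  have "(\<Sum>e\<in>exps p k. G p k e a * int (mono_eval k e \<alpha>))
      = (\<Sum>e\<in>exps p k. \<Prod>i<k. gam p (e i) (a i) * int (\<alpha> i) ^ (e i))"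
    unfolding G_def mono_eval_def by (simp add: prod.distrib)
  also have "\<dots> = (\<Prod>i<k. \<Sum>j<p. gam p j (a i) * int (\<alpha> i) ^ j)"
    by (rule sum_exps_prod)
  finally have e1: "(\<Sum>e\<in>exps p k. G p k e a * int (mono_eval k e \<alpha>))
      = (\<Prod>i<k. \<Sum>j<p. gam p j (a i) * int (\<alpha> i) ^ j)" .
  have c: "[(\<Prod>i<k. \<Sum>j<p. gam p j (a i) * int (\<alpha> i) ^ j) = (\<Prod>i<k. (if \<alpha> i = a i then 1 else 0))] (mod int p)"
  proof (rule cong_prod)
    fix i assume "i \<in> {..<k}"
    then have "\<alpha> i < p" "a i < p" using assms by (auto simp: points_def)
    then show "[(\<Sum>j<p. gam p j (a i) * int (\<alpha> i) ^ j) = (if \<alpha> i = a i then 1 else 0)] (mod int p)"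
      using delta1'[OF assms(1)] by blast
  qed
  have pe: "(\<Prod>i<k. (if \<alpha> i = a i then 1 else 0)::int) = (if \<forall>i<k. \<alpha> i = a i then 1 else 0)"
    by (induction k) (auto simp: less_Suc_eq)
  have ae: "(\<forall>i<k. \<alpha> i = a i) = (\<alpha> = a)"
  proof
    assume h: "\<forall>i<k. \<alpha> i = a i"
    show "\<alpha> = a"
    proof
      fix i show "\<alpha> i = a i"
      proof (cases "i < k")
        case True then show ?thesis using h by blast
      next
        case False then show ?thesis using assms(2,3) by (simp add: points_def)
      qed
    qed
  qed simp
  show ?thesis using c unfolding e1 pe ae .
qed


definition ip :: "nat \<Rightarrow> (nat \<Rightarrow> nat) set \<Rightarrow> ((nat \<Rightarrow> nat) \<Rightarrow> int) \<Rightarrow> (nat \<Rightarrow> nat) \<Rightarrow> int" where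
  "ip k S h f = (\<Sum>a\<in>S. h a * int (mono_eval k f a))"

definition Wset :: "nat \<Rightarrow> nat \<Rightarrow> (nat \<Rightarrow> nat) set \<Rightarrow> nat \<Rightarrow> ((nat \<Rightarrow> nat) \<Rightarrow> int) set" where
  "Wset p k S m = {h. \<forall>f\<in>exps p k. tdeg k f \<le> m \<longrightarrow> int p dvd ip k S h f}"

lemma kill:
  assumes "prime p" "S \<subseteq> points p k" "\<forall>f\<in>exps p k. int p dvd ip k S h f" "\<alpha> \<in> S"
  shows "int p dvd h \<alpha>"
proof -
  have fin: "finite S" using assms(2) finite_points finite_subset by blast
  have "[(\<Sum>a\<in>S. h a * (\<Sum>e\<in>exps p k. G p k e \<alpha> * int (mono_eval k e a)))
        = (\<Sum>a\<in>S. h a * (if a = \<alpha> then 1 else 0))] (mod int p)"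
  proof (rule cong_sum, rule cong_scalar_left)
    fix a assume "a \<in> S"
    then show "[(\<Sum>e\<in>exps p k. G p k e \<alpha> * int (mono_eval k e a)) = (if a = \<alpha> then 1 else 0)] (mod int p)"
      using delta[OF assms(1), of a k \<alpha>] assms(2,4) by blast
  qed
  moreover have "(\<Sum>a\<in>S. h a * (if a = \<alpha> then 1 else 0)) = h \<alpha>"
    using fin assms(4) by (simp add: if_distrib sum.delta' cong: if_cong)
  moreover have "(\<Sum>a\<in>S. h a * (\<Sum>e\<in>exps p k. G p k e \<alpha> * int (mono_eval k e a)))
      = (\<Sum>e\<in>exps p k. G p k e \<alpha> * ip k S h e)"
    unfolding ip_def by (simp add: sum_distrib_left sum.swap[of _ S] algebra_simps)
  moreover have "int p dvd (\<Sum>e\<in>exps p k. G p k e \<alpha> * ip k S h e)"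
    using assms(3) by (intro dvd_sum) auto
  ultimately show ?thesis using cong_dvd_iff by metis
qed

definition up :: "nat \<Rightarrow> nat \<Rightarrow> (nat \<Rightarrow> nat) \<Rightarrow> (nat \<Rightarrow> nat)" where
  "up p i g = g(i := (if g i = p - 1 then 1 else Suc (g i)))"

lemma mono_eval_remove:
  assumes "i < k"
  shows "mono_eval k g a = a i ^ g i * (\<Prod>j\<in>{..<k}-{i}. a j ^ g j)"
  unfolding mono_eval_def using assms by (subst prod.remove[of _ i]) auto

lemma tdeg_remove:
  assumes "i < k"
  shows "tdeg k g = g i + (\<Sum>j\<in>{..<k}-{i}. g j)"
  unfolding tdeg_def using assms by (subst sum.remove[of _ i]) auto

lemma up_props:
  assumes "prime p" "i < k" "g \<in> exps p k"
  shows "up p i g \<in> exps p k" "tdeg k (up p i g) \<le> Suc (tdeg k g)"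
proof -
  have p2: "2 \<le> p" using prime_ge_2_nat[OF assms(1)] .
  show "up p i g \<in> exps p k"
    using assms(2,3) p2 by (auto simp: up_def exps_def)
  have r: "(\<Sum>j\<in>{..<k}-{i}. up p i g j) = (\<Sum>j\<in>{..<k}-{i}. g j)"
    by (intro sum.cong) (auto simp: up_def)
  show "tdeg k (up p i g) \<le> Suc (tdeg k g)"
    using tdeg_remove[OF assms(2), of "up p i g"] tdeg_remove[OF assms(2), of g] r p2
    by (auto simp: up_def)
qed

lemma up_cong:
  assumes "prime p" "i < k" "g \<in> exps p k" "a \<in> points p k"
  shows "[int (a i) * int (mono_eval k g a) = int (mono_eval k (up p i g) a)] (mod int p)"
proof -
  have r: "(\<Prod>j\<in>{..<k}-{i}. a j ^ up p i g j) = (\<Prod>j\<in>{..<k}-{i}. a j ^ g j)"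
    by (intro prod.cong) (auto simp: up_def)
  have ai: "a i < p" using assms by (auto simp: points_def)
  have "[int (a i) * int (a i) ^ g i = int (a i) ^ up p i g i] (mod int p)"
  proof (cases "g i = p - 1")
    case True
    have "int (a i) * int (a i) ^ g i = int (a i) ^ p"
      using True prime_gt_0_nat[OF assms(1)] by (metis Suc_diff_1 power_Suc)
    then show ?thesis using True fermat_nat_pow[OF assms(1) ai] by (simp add: up_def)
  qed (simp add: up_def)
  then have "[int (a i) * int (a i) ^ g i * int (\<Prod>j\<in>{..<k}-{i}. a j ^ g j)
           = int (a i) ^ up p i g i * int (\<Prod>j\<in>{..<k}-{i}. a j ^ g j)] (mod int p)"
    by (rule cong_mult[OF _ cong_refl])
  then show ?thesis
    unfolding mono_eval_remove[OF assms(2), of g] mono_eval_remove[OF assms(2), of "up p i g"] r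
    by (simp add: mult.assoc)
qed

lemma propagate:
  assumes "prime p" "S \<subseteq> points p k" "Wset p k S d \<subseteq> Wset p k S (Suc d)"
  shows "Wset p k S d \<subseteq> Wset p k S (Suc d + n)"
proof (induction n)
  case 0 then show ?case using assms(3) by simp
next
  case (Suc n)
  show ?case
  proof
    fix h assume hW: "h \<in> Wset p k S d"
    show "h \<in> Wset p k S (Suc d + Suc n)"
      unfolding Wset_def
    proof (intro CollectI ballI impI)
      fix f assume f: "f \<in> exps p k" and tf: "tdeg k f \<le> Suc d + Suc n"
      show "int p dvd ip k S h f"
      proof (cases "tdeg k f \<le> Suc d + n")
        case True
        have "h \<in> Wset p k S (Suc d + n)" using Suc.IH hW by (rule subsetD)
        then show ?thesis using f True unfolding Wset_def by blast
      next
        case False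
        then have tf': "tdeg k f = Suc (Suc d + n)" using tf by simp
        have "\<exists>i<k. f i > 0"
        proof (rule ccontr)
          assume "\<not> (\<exists>i<k. f i > 0)"
          then have "tdeg k f = 0" by (auto simp: tdeg_def)
          then show False using tf' by simp
        qed
        then obtain i where i: "i < k" "f i > 0" by blast
        define f' where "f' = f(i := f i - 1)"
        have f'e: "f' \<in> exps p k" using f i by (auto simp: f'_def exps_def)
        have rs: "(\<Sum>j\<in>{..<k}-{i}. f' j) = (\<Sum>j\<in>{..<k}-{i}. f j)"
          by (intro sum.cong) (auto simp: f'_def)
        have tf'': "tdeg k f' = Suc d + n"
          using tdeg_remove[OF i(1), of f] tdeg_remove[OF i(1), of f'] rs tf' i(2)
          by (simp add: f'_def)
        define h' where "h' = (\<lambda>a. h a * int (a i))"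
        have "h' \<in> Wset p k S d"
          unfolding Wset_def
        proof (intro CollectI ballI impI)
          fix g assume g: "g \<in> exps p k" and tg: "tdeg k g \<le> d"
          have "[ip k S h' g = ip k S h (up p i g)] (mod int p)"
            unfolding ip_def h'_def mult.assoc
          proof (rule cong_sum, rule cong_scalar_left)
            fix a assume "a \<in> S"
            then show "[int (a i) * int (mono_eval k g a) = int (mono_eval k (up p i g) a)] (mod int p)"
              using up_cong[OF assms(1) i(1) g] assms(2) by blast
          qed
          moreover have "int p dvd ip k S h (up p i g)"
          proof -
            have "h \<in> Wset p k S (Suc d)" using assms(3) hW by (rule subsetD)
            moreover have "tdeg k (up p i g) \<le> Suc d" using up_props(2)[OF assms(1) i(1) g] tg by linarith
            ultimately show ?thesis using up_props(1)[OF assms(1) i(1) g] unfolding Wset_def by blast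
          qed
          ultimately show "int p dvd ip k S h' g" using cong_dvd_iff by blast
        qed
        then have "h' \<in> Wset p k S (Suc d + n)" using Suc.IH by blast
        then have "int p dvd ip k S h' f'" using f'e tf'' by (auto simp: Wset_def)
        moreover have "ip k S h f = ip k S h' f'"
        proof -
          have rp: "(\<Prod>j\<in>{..<k}-{i}. a j ^ f' j) = (\<Prod>j\<in>{..<k}-{i}. a j ^ f j)" for a :: "nat \<Rightarrow> nat"
            by (intro prod.cong) (auto simp: f'_def)
          have "mono_eval k f a = a i * mono_eval k f' a" for a
            unfolding mono_eval_remove[OF i(1), of f] mono_eval_remove[OF i(1), of f'] rp
            using i(2) by (cases "f i") (simp_all add: f'_def)
          then show ?thesis unfolding ip_def h'_def by (intro sum.cong) auto
        qed
        ultimately show ?thesis by simp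
      qed
    qed
  qed
qed


definition Nset :: "nat \<Rightarrow> nat \<Rightarrow> (nat \<Rightarrow> nat) set" where
  "Nset k d = {f. (\<forall>i\<ge>k. f i = 0) \<and> tdeg k f \<le> d}"

lemma finite_Nset: "finite (Nset k d)"
proof (rule finite_subset[OF _ finite_exps[of "Suc d" k]])
  show "Nset k d \<subseteq> exps (Suc d) k"
  proof
    fix f assume f: "f \<in> Nset k d"
    have "f i < Suc d" if "i < k" for i
    proof -
      have "f i \<le> tdeg k f" unfolding tdeg_def using that by (intro member_le_sum) auto
      then show ?thesis using f by (auto simp: Nset_def)
    qed
    then show "f \<in> exps (Suc d) k" using f by (auto simp: Nset_def exps_def)
  qed
qed

lemma card_Nset: "card (Nset k d) \<le> (d + k) choose k"
proof (induction k arbitrary: d)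
  case 0
  have "Nset 0 d = {\<lambda>_. 0}" by (auto simp: Nset_def tdeg_def)
  then show ?case by simp
next
  case (Suc k)
  have sub: "Nset (Suc k) d \<subseteq> (\<Union>i\<in>{..d}. (\<lambda>f. f(k := d - i)) ` Nset k i)"
  proof
    fix f assume f: "f \<in> Nset (Suc k) d"
    have td: "tdeg (Suc k) f = tdeg k f + f k" by (simp add: tdeg_def)
    have td0: "tdeg k (f(k := 0)) = tdeg k f" unfolding tdeg_def by (intro sum.cong) auto
    have fk: "f k \<le> d" using f td by (auto simp: Nset_def)
    have A: "f(k := 0) \<in> Nset k (d - f k)" using f td td0 by (auto simp: Nset_def)
    have B: "f = (\<lambda>g. g(k := d - (d - f k))) (f(k := 0))" using fk by auto
    have "f \<in> (\<lambda>g. g(k := d - (d - f k))) ` Nset k (d - f k)" by (rule image_eqI[where x="f(k:=0)"]) (use A fk in auto)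
    then show "f \<in> (\<Union>i\<in>{..d}. (\<lambda>f. f(k := d - i)) ` Nset k i)" by auto
  qed
  have "card (Nset (Suc k) d) \<le> card (\<Union>i\<in>{..d}. (\<lambda>f. f(k := d - i)) ` Nset k i)"
    by (rule card_mono[OF _ sub]) (auto intro!: finite_imageI finite_Nset)
  also have "\<dots> \<le> (\<Sum>i\<le>d. card ((\<lambda>f. f(k := d - i)) ` Nset k i))"
    by (rule card_UN_le) simp
  also have "\<dots> \<le> (\<Sum>i\<le>d. card (Nset k i))"
    by (intro sum_mono card_image_le finite_Nset)
  also have "\<dots> \<le> (\<Sum>i\<le>d. (k + i) choose i)"
  proof (intro sum_mono)
    fix i assume "i \<in> {..d}"
    have "(i + k) choose k = (k + i) choose i"
      using binomial_symmetric[of k "i + k"] by (simp add: add.commute)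
    then show "card (Nset k i) \<le> (k + i) choose i" using Suc.IH[of i] by simp
  qed
  also have "\<dots> = Suc (k + d) choose d" by (rule sum_choose_lower)
  also have "\<dots> = (d + Suc k) choose Suc k"
    using binomial_symmetric[of d "Suc (k + d)"] by (simp add: add.commute)
  finally show ?case .
qed

lemma choose_le_Suc: "(n choose k) \<le> (Suc n choose k)"
  by (cases k) auto

lemma card_low_exps: "card {f\<in>exps p k. tdeg k f \<le> d} \<le> (d + k + 1) choose k"
proof -
  have "{f\<in>exps p k. tdeg k f \<le> d} \<subseteq> Nset k d" by (auto simp: exps_def Nset_def)
  then have "card {f\<in>exps p k. tdeg k f \<le> d} \<le> card (Nset k d)"
    by (rule card_mono[OF finite_Nset])
  also have "\<dots> \<le> (d + k) choose k" by (rule card_Nset)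
  also have "\<dots> \<le> (d + k + 1) choose k" using choose_le_Suc by simp
  finally show ?thesis .
qed

lemma pigeon:
  assumes "prime p" "finite S" "finite L" "card L < card S"
  shows "\<exists>h. (\<exists>a\<in>S. \<not> int p dvd h a) \<and> (\<forall>f\<in>L. int p dvd ip k S h f)"
proof -
  have p1: "1 < p" using prime_gt_1_nat[OF assms(1)] .
  define X where "X = PiE S (\<lambda>_. {0..<int p})"
  define Y where "Y = PiE L (\<lambda>_. {0..<int p})"
  define \<Phi> where "\<Phi> = (\<lambda>h. restrict (\<lambda>f. ip k S h f mod int p) L)"
  have cX: "card X = p ^ card S" using assms(2) unfolding X_def by (simp add: card_PiE)
  have cY: "card Y = p ^ card L" using assms(3) unfolding Y_def by (simp add: card_PiE)
  have img: "\<Phi> ` X \<subseteq> Y"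
  proof
    fix y assume "y \<in> \<Phi> ` X"
    then obtain h where hy: "y = \<Phi> h" by blast
    have "\<Phi> h \<in> Y" unfolding \<Phi>_def Y_def restrict_PiE_iff using p1 by simp
    then show "y \<in> Y" using hy by simp
  qed
  have finY: "finite Y" unfolding Y_def by (rule finite_PiE) (simp_all add: assms(3))
  have "\<not> inj_on \<Phi> X"
  proof
    assume inj: "inj_on \<Phi> X"
    have "card X \<le> card Y" by (rule card_inj_on_le[OF inj img finY])
    moreover have "p ^ card L < p ^ card S" by (rule power_strict_increasing[OF assms(4) p1])
    ultimately show False using cX cY by simp
  qed
  then obtain h1 h2 where h12: "h1 \<in> X" "h2 \<in> X" "h1 \<noteq> h2" "\<Phi> h1 = \<Phi> h2"
    unfolding inj_on_def by blast
  have "\<exists>a\<in>S. h1 a \<noteq> h2 a"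
  proof (rule ccontr)
    assume "\<not> (\<exists>a\<in>S. h1 a \<noteq> h2 a)"
    then have "h1 = h2" using h12(1,2) unfolding X_def by (intro PiE_ext[of h1 S _ h2]) auto
    then show False using h12(3) by simp
  qed
  then obtain a where a: "a \<in> S" "h1 a \<noteq> h2 a" by blast
  define h where "h = (\<lambda>a. h1 a - h2 a)"
  have "\<not> int p dvd h a"
  proof
    assume d: "int p dvd h a"
    have "h1 a \<in> {0..<int p}" "h2 a \<in> {0..<int p}"
      using h12(1,2) a(1) unfolding X_def by (auto simp: PiE_def Pi_def)
    then have "\<bar>h a\<bar> < int p" by (simp add: h_def abs_if)
    moreover have "h a \<noteq> 0" using a(2) by (simp add: h_def)
    moreover have "\<bar>int p\<bar> \<le> \<bar>h a\<bar>" using dvd_imp_le_int[OF \<open>h a \<noteq> 0\<close> d] .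
    ultimately show False by simp
  qed
  moreover have "\<forall>f\<in>L. int p dvd ip k S h f"
  proof
    fix f assume f: "f \<in> L"
    have "\<Phi> h1 f = \<Phi> h2 f" using h12(4) by simp
    then have "ip k S h1 f mod int p = ip k S h2 f mod int p"
      using f unfolding \<Phi>_def by simp
    then have "int p dvd ip k S h1 f - ip k S h2 f" by (simp add: mod_eq_dvd_iff)
    moreover have "ip k S h f = ip k S h1 f - ip k S h2 f"
      unfolding ip_def h_def by (simp add: sum_subtractf left_diff_distrib)
    ultimately show "int p dvd ip k S h f" by simp
  qed
  ultimately show ?thesis using a(1) by blast
qed


definition fT :: "nat \<Rightarrow> nat \<Rightarrow> (nat \<Rightarrow> nat) \<Rightarrow> nat set \<Rightarrow> (nat \<Rightarrow> nat)" where
  "fT p k e T = (\<lambda>i. if i < k \<and> i \<notin> T then p - 1 - e i else 0)"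

definition ct :: "nat \<Rightarrow> (nat \<Rightarrow> nat) \<Rightarrow> nat set \<Rightarrow> int" where
  "ct k e T = (\<Prod>i\<in>T. if e i = 0 then 1 else 0) * (-1) ^ card ({..<k} - T)"

lemma expand:
  "G p k e a = (\<Sum>T\<in>Pow {..<k}. ct k e T * int (mono_eval k (fT p k e T) a))"
proof -
  have "G p k e a = (\<Prod>i<k. (if e i = 0 then 1 else 0) + (- (int (a i) ^ (p - Suc (e i)))))"
    unfolding G_def gam_def by simp
  also have "\<dots> = (\<Sum>T\<in>Pow {..<k}. (\<Prod>i\<in>T. if e i = 0 then 1 else 0) *
                      (\<Prod>i\<in>{..<k} - T. - (int (a i) ^ (p - Suc (e i)))))"
    by (rule prod_add) simp
  also have "\<dots> = (\<Sum>T\<in>Pow {..<k}. ct k e T * int (mono_eval k (fT p k e T) a))"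
  proof (rule sum.cong[OF refl])
    fix T assume T: "T \<in> Pow {..<k}"
    have m: "(\<Prod>i\<in>{..<k} - T. - (int (a i) ^ (p - Suc (e i))))
        = (-1) ^ card ({..<k} - T) * (\<Prod>i\<in>{..<k} - T. int (a i) ^ (p - Suc (e i)))"
      by (rule prod_uminus)
    have "int (mono_eval k (fT p k e T) a) = (\<Prod>i<k. int (a i) ^ fT p k e T i)"
      unfolding mono_eval_def by simp
    also have "\<dots> = (\<Prod>i\<in>{..<k} - T. int (a i) ^ fT p k e T i) * (\<Prod>i\<in>T. int (a i) ^ fT p k e T i)"
      using T by (intro prod.subset_diff) auto
    also have "(\<Prod>i\<in>T. int (a i) ^ fT p k e T i) = 1"
      by (intro prod.neutral) (auto simp: fT_def)
    also have "(\<Prod>i\<in>{..<k} - T. int (a i) ^ fT p k e T i) = (\<Prod>i\<in>{..<k} - T. int (a i) ^ (p - Suc (e i)))"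
      by (intro prod.cong) (auto simp: fT_def)
    finally have "int (mono_eval k (fT p k e T) a) = (\<Prod>i\<in>{..<k} - T. int (a i) ^ (p - Suc (e i)))" by simp
    then show "(\<Prod>i\<in>T. if e i = 0 then 1 else 0) * (\<Prod>i\<in>{..<k} - T. - (int (a i) ^ (p - Suc (e i))))
        = ct k e T * int (mono_eval k (fT p k e T) a)"
      unfolding m ct_def by (simp add: mult.assoc)
  qed
  finally show ?thesis .
qed

lemma fT_exps: "0 < p \<Longrightarrow> fT p k e T \<in> exps p k"
  by (auto simp: fT_def exps_def)

lemma tdeg_fT:
  assumes "e \<in> exps p k"
  shows "tdeg k (fT p k e T) + tdeg k e \<le> k * (p - 1)"
proof -
  have "tdeg k (fT p k e T) + tdeg k e = (\<Sum>i<k. fT p k e T i + e i)"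
    unfolding tdeg_def by (simp add: sum.distrib)
  also have "\<dots> \<le> of_nat (card {..<k}) * (p - 1)"
    by (rule sum_bounded_above) (use assms in \<open>auto simp: fT_def exps_def\<close>)
  finally show ?thesis by simp
qed

lemma tdeg_fT_strict:
  assumes "e \<in> exps p k" "i0 \<in> T" "i0 < k" "e i0 = 0" "2 \<le> p"
  shows "tdeg k (fT p k e T) + tdeg k e + 1 \<le> k * (p - 1)"
proof -
  let ?g = "\<lambda>i. fT p k e T i + e i"
  have "tdeg k (fT p k e T) + tdeg k e = (\<Sum>i<k. ?g i)"
    unfolding tdeg_def by (simp add: sum.distrib)
  also have "\<dots> = ?g i0 + (\<Sum>i\<in>{..<k} - {i0}. ?g i)"
    using assms(3) by (subst sum.remove[of _ i0]) auto
  also have "?g i0 = 0" using assms by (auto simp: fT_def)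
  also have "(\<Sum>i\<in>{..<k} - {i0}. ?g i) \<le> of_nat (card ({..<k} - {i0})) * (p - 1)"
    by (rule sum_bounded_above) (use assms in \<open>auto simp: fT_def exps_def\<close>)
  also have "card ({..<k} - {i0}) = k - 1" using assms(3) by simp
  finally have "tdeg k (fT p k e T) + tdeg k e \<le> (k - 1) * (p - 1)" by simp
  moreover have "(k - 1) * (p - 1) + 1 \<le> k * (p - 1)"
  proof -
    have "k * (p - 1) = (k - 1) * (p - 1) + (p - 1)"
      using assms(3) by (metis Suc_diff_1 gr_implies_not0 mult_Suc neq0_conv add.commute)
    then show ?thesis using assms(5) by simp
  qed
  ultimately show ?thesis by simp
qed

lemma ct_nz:
  assumes "ct k e T \<noteq> 0" "T \<subseteq> {..<k}" "i \<in> T"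
  shows "e i = 0"
proof (rule ccontr)
  assume "e i \<noteq> 0"
  have "finite T" using assms(2) finite_subset by blast
  then have "(\<Prod>i\<in>T. if e i = 0 then 1 else 0::int) = 0"
    using assms(3) \<open>e i \<noteq> 0\<close> by (intro prod_zero) auto
  then show False using assms(1) by (simp add: ct_def)
qed

lemma cc_expand:
  "(\<Sum>a\<in>S. h a * G p k e a) = (\<Sum>T\<in>Pow {..<k}. ct k e T * ip k S h (fT p k e T))"
  unfolding expand ip_def
  by (simp add: sum_distrib_left sum.swap[of _ S] algebra_simps)


lemma construct:
  assumes p: "prime p" and S: "S \<subseteq> points p k" and hW: "h \<in> Wset p k S d"
    and f0: "f0 \<in> exps p k" "tdeg k f0 = Suc d" "\<not> int p dvd ip k S h f0"
    and dk: "Suc d \<le> k * (p - 1)"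
  shows "\<exists>H. (\<forall>\<alpha>\<in>points p k. H \<alpha> < p) \<and>
             fun_degree_eq p k H (k * (p - 1) - (d + 1)) \<and> supp p k H \<subseteq> S"
proof -
  have p0: "0 < p" using prime_gt_0_nat[OF p] .
  have p2: "2 \<le> p" using prime_ge_2_nat[OF p] .
  have finS: "finite S" using S finite_points finite_subset by blast
  define H where "H = (\<lambda>\<alpha>. nat ((if \<alpha> \<in> S then h \<alpha> else 0) mod int p))"
  define cc where "cc = (\<lambda>e. \<Sum>a\<in>S. h a * G p k e a)"
  define c where "c = (\<lambda>e. if e \<in> exps p k then nat (cc e mod int p) else 0)"
  have ic: "int (c e) = cc e mod int p" if "e \<in> exps p k" for e
    using that p0 by (simp add: c_def)
  have Hlt: "\<forall>\<alpha>\<in>points p k. H \<alpha> < p"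
    using p0 by (auto simp: H_def nat_less_iff)
  have supp: "supp p k H \<subseteq> S" by (auto simp: supp_def H_def)
  have rep: "represents p k c H"
    unfolding represents_def
  proof (intro conjI allI impI ballI)
    fix e show "c e < p" using p0 by (auto simp: c_def nat_less_iff)
  next
    fix e assume "e \<notin> exps p k" then show "c e = 0" by (simp add: c_def)
  next
    fix \<alpha> assume \<alpha>: "\<alpha> \<in> points p k"
    have "[(\<Sum>e\<in>exps p k. int (c e) * int (mono_eval k e \<alpha>))
         = (\<Sum>e\<in>exps p k. cc e * int (mono_eval k e \<alpha>))] (mod int p)"
    proof (rule cong_sum, rule cong_mult[OF _ cong_refl])
      fix e assume "e \<in> exps p k"
      then show "[int (c e) = cc e] (mod int p)" by (simp add: ic cong_def)
    qed
    also have "(\<Sum>e\<in>exps p k. cc e * int (mono_eval k e \<alpha>))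
        = (\<Sum>a\<in>S. h a * (\<Sum>e\<in>exps p k. G p k e a * int (mono_eval k e \<alpha>)))"
    proof -
      have "(\<Sum>e\<in>exps p k. cc e * int (mono_eval k e \<alpha>))
          = (\<Sum>e\<in>exps p k. \<Sum>a\<in>S. h a * (G p k e a * int (mono_eval k e \<alpha>)))"
        unfolding cc_def sum_distrib_right by (simp add: mult.assoc)
      also have "\<dots> = (\<Sum>a\<in>S. \<Sum>e\<in>exps p k. h a * (G p k e a * int (mono_eval k e \<alpha>)))"
        by (rule sum.swap)
      also have "\<dots> = (\<Sum>a\<in>S. h a * (\<Sum>e\<in>exps p k. G p k e a * int (mono_eval k e \<alpha>)))"
        by (simp add: sum_distrib_left)
      finally show ?thesis .
    qed
    also have "[\<dots> = (\<Sum>a\<in>S. h a * (if \<alpha> = a then 1 else 0))] (mod int p)"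
    proof (rule cong_sum, rule cong_scalar_left)
      fix a assume "a \<in> S"
      then show "[(\<Sum>e\<in>exps p k. G p k e a * int (mono_eval k e \<alpha>)) = (if \<alpha> = a then 1 else 0)] (mod int p)"
        using delta[OF p \<alpha>] S by blast
    qed
    also have "(\<Sum>a\<in>S. h a * (if \<alpha> = a then 1 else 0)) = (if \<alpha> \<in> S then h \<alpha> else 0)"
      using finS by (simp add: if_distrib sum.delta cong: if_cong)
    finally have cg: "[(\<Sum>e\<in>exps p k. int (c e) * int (mono_eval k e \<alpha>)) = (if \<alpha> \<in> S then h \<alpha> else 0)] (mod int p)" .
    have "int ((\<Sum>e\<in>exps p k. c e * mono_eval k e \<alpha>) mod p)
        = (\<Sum>e\<in>exps p k. int (c e) * int (mono_eval k e \<alpha>)) mod int p"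
      by (simp add: of_nat_mod)
    also have "\<dots> = (if \<alpha> \<in> S then h \<alpha> else 0) mod int p" using cg by (simp add: cong_def)
    also have "\<dots> = int (H \<alpha>)" using p0 by (simp add: H_def)
    finally show "H \<alpha> = (\<Sum>e\<in>exps p k. c e * mono_eval k e \<alpha>) mod p" by linarith
  qed
  define D where "D = k * (p - 1) - (d + 1)"
  have upper: "\<forall>e\<in>exps p k. c e \<noteq> 0 \<longrightarrow> tdeg k e \<le> D"
  proof (intro ballI impI)
    fix e assume e: "e \<in> exps p k" and ce: "c e \<noteq> 0"
    show "tdeg k e \<le> D"
    proof (rule ccontr)
      assume "\<not> tdeg k e \<le> D"
      then have big: "tdeg k e > D" by simp
      have "int p dvd cc e"
        unfolding cc_def cc_expand
      proof (rule dvd_sum)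
        fix T assume T: "T \<in> Pow {..<k}"
        have "tdeg k (fT p k e T) \<le> d"
          using tdeg_fT[OF e, of T] big dk by (simp add: D_def)
        then have "int p dvd ip k S h (fT p k e T)"
          using hW fT_exps[OF p0] by (auto simp: Wset_def)
        then show "int p dvd ct k e T * ip k S h (fT p k e T)" by simp
      qed
      then have "c e = 0" using e by (simp add: c_def)
      then show False using ce by simp
    qed
  qed
  define e0 where "e0 = (\<lambda>i. if i < k then p - 1 - f0 i else 0)"
  have e0e: "e0 \<in> exps p k" using p0 by (auto simp: e0_def exps_def)
  have f0le: "f0 i \<le> p - 1" if "i < k" for i using f0(1) that by (auto simp: exps_def)
  have "tdeg k e0 + tdeg k f0 = (\<Sum>i<k. e0 i + f0 i)" unfolding tdeg_def by (simp add: sum.distrib)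
  also have "\<dots> = (\<Sum>i<k. p - 1)"
  proof (intro sum.cong refl)
    fix i assume "i \<in> {..<k}"
    then show "e0 i + f0 i = p - 1" using f0le[of i] by (simp add: e0_def)
  qed
  finally have "tdeg k e0 + tdeg k f0 = k * (p - 1)" by simp
  then have te0: "tdeg k e0 = D" using f0(2) by (simp add: D_def)
  have fe0: "fT p k e0 {} = f0"
  proof
    fix i show "fT p k e0 {} i = f0 i"
      using f0le[of i] f0(1) by (cases "i < k") (auto simp: fT_def e0_def exps_def)
  qed
  have "cc e0 = ct k e0 {} * ip k S h (fT p k e0 {}) +
        (\<Sum>T\<in>Pow {..<k} - {{}}. ct k e0 T * ip k S h (fT p k e0 T))"
    unfolding cc_def cc_expand by (subst sum.remove[of _ "{}"]) auto
  moreover have "int p dvd (\<Sum>T\<in>Pow {..<k} - {{}}. ct k e0 T * ip k S h (fT p k e0 T))"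
  proof (rule dvd_sum)
    fix T assume T: "T \<in> Pow {..<k} - {{}}"
    show "int p dvd ct k e0 T * ip k S h (fT p k e0 T)"
    proof (cases "ct k e0 T = 0")
      case False
      from T obtain i0 where i0: "i0 \<in> T" by auto
      have "i0 < k" using T i0 by auto
      moreover have "e0 i0 = 0" using ct_nz[OF False _ i0] T by auto
      ultimately have "tdeg k (fT p k e0 T) + tdeg k e0 + 1 \<le> k * (p - 1)"
        using tdeg_fT_strict[OF e0e i0 _ _ p2] by blast
      then have "tdeg k (fT p k e0 T) \<le> d" using te0 dk by (simp add: D_def)
      then have "int p dvd ip k S h (fT p k e0 T)"
        using hW fT_exps[OF p0] by (auto simp: Wset_def)
      then show ?thesis by simp
    qed simp
  qed
  moreover have "ct k e0 {} = (-1) ^ k" by (simp add: ct_def)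
  ultimately have "[cc e0 = (-1) ^ k * ip k S h f0] (mod int p)"
    using fe0 by (simp add: cong_iff_dvd_diff)
  moreover have "\<not> int p dvd (-1) ^ k * ip k S h f0"
  proof
    assume "int p dvd (-1) ^ k * ip k S h f0"
    then have "int p dvd (-1) ^ k * ((-1) ^ k * ip k S h f0)" by (rule dvd_mult)
    then show False using f0(3) by (simp only: left_minus_one_mult_self)
  qed
  ultimately have "\<not> int p dvd cc e0" using cong_dvd_iff by blast
  then have m1: "cc e0 mod int p \<noteq> 0" by (simp add: dvd_eq_mod_eq_0)
  have m2: "cc e0 mod int p \<ge> 0" using p0 by simp
  from m1 m2 have "cc e0 mod int p > 0" by linarith
  then have "c e0 \<noteq> 0" using e0e by (simp add: c_def)
  then have "fun_degree_eq p k H D"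
    unfolding fun_degree_eq_def using rep e0e te0 upper by blast
  then show ?thesis using Hlt supp by (auto simp: D_def)
qed

theorem lemma3p3:
  fixes p d k :: nat and S :: "(nat \<Rightarrow> nat) set"
  assumes "prime p" and "d > 0" and "k \<ge> d + 1"
    and "S \<subseteq> points p k"
    and "card S \<ge> ((d + k + 1) choose k) + 1"
  shows "\<exists>h. (\<forall>\<alpha>\<in>points p k. h \<alpha> < p) \<and>
             fun_degree_eq p k h (k * (p - 1) - (d + 1)) \<and> supp p k h \<subseteq> S"
proof -
  have p: "prime p" by fact
  have finS: "finite S" using assms(4) finite_points finite_subset by blast
  let ?L = "{f\<in>exps p k. tdeg k f \<le> d}"
  have finL: "finite ?L" using finite_exps by simp
  have "card ?L < card S" using card_low_exps[of p k d] assms(5) by linarith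
  then obtain h0 where h0: "\<exists>a\<in>S. \<not> int p dvd h0 a" "\<forall>f\<in>?L. int p dvd ip k S h0 f"
    using pigeon[OF p finS finL \<open>card ?L < card S\<close>, where k=k] by blast
  have h0W: "h0 \<in> Wset p k S d" using h0(2) by (auto simp: Wset_def)
  have dk: "Suc d \<le> k * (p - 1)"
  proof -
    have "1 \<le> p - 1" using prime_ge_2_nat[OF p] by simp
    then have "k * 1 \<le> k * (p - 1)" by (rule mult_le_mono2)
    then have "k \<le> k * (p - 1)" by (simp only: mult_1_right)
    then show ?thesis using assms(3) by linarith
  qed
  have "\<not> Wset p k S d \<subseteq> Wset p k S (Suc d)"
  proof
    assume sub: "Wset p k S d \<subseteq> Wset p k S (Suc d)"
    have "h0 \<in> Wset p k S (Suc d + k * (p - 1))" using propagate[OF p assms(4) sub] h0W by blast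
    moreover have "tdeg k f \<le> Suc d + k * (p - 1)" if "f \<in> exps p k" for f
    proof -
      have "tdeg k f \<le> of_nat (card {..<k}) * (p - 1)"
        unfolding tdeg_def by (rule sum_bounded_above) (use that in \<open>auto simp: exps_def\<close>)
      then show ?thesis by simp
    qed
    ultimately have "\<forall>f\<in>exps p k. int p dvd ip k S h0 f" by (auto simp: Wset_def)
    then have "\<forall>a\<in>S. int p dvd h0 a" using kill[OF p assms(4)] by blast
    then show False using h0(1) by blast
  qed
  then obtain h where hW: "h \<in> Wset p k S d" and hn: "h \<notin> Wset p k S (Suc d)" by blast
  from hn obtain f0 where f0: "f0 \<in> exps p k" "tdeg k f0 \<le> Suc d" "\<not> int p dvd ip k S h f0"
    by (auto simp: Wset_def)
  have t0: "tdeg k f0 = Suc d"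
  proof (rule ccontr)
    assume "tdeg k f0 \<noteq> Suc d"
    then have "tdeg k f0 \<le> d" using f0(2) by simp
    then show False using hW f0 by (auto simp: Wset_def)
  qed
  show ?thesis using construct[OF p assms(4) hW f0(1) t0 f0(3) dk] by simp
qed

end
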